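(* Let $\lambda\ge1$ and let $f_\lambda$ be the number of free subgroups of index $6\lambda$ in $PSL_2(\mathbb Z)$. Then: (1) $f_\lambda\equiv-1\pmod 3$ if and only if the ternary expansion of $\lambda$ lies in $\{0,2\}^*1$; (2) $f_\lambda\equiv1\pmod 3$ if and only if the ternary expansion of $\lambda$ lies in $\{0,2\}^*10 0^*\cup\{0,2\}^*12 2^*$; (3) for all other $\lambda\ge1$, $f_\lambda\equiv0\pmod3$.
   Context: Equivalently, $F(z)=1+\sum_{\lambda\ge1}f_\lambda z^\lambda$ is the unique formal power series with $F(0)=1$ satisfying $zF^2(z)-(1-4z)F(z)+6z^2F'(z)+1=0$. Word notation: ternary expansions are written as strings of digits $0,1,2$ with the most significant digit on the left, and leading $0$'s may be added or removed at will; for a set $S$ of letters, $S^*$ is the set of all finite words over $S$; $a^*=\{\text{empty word},a,aa,\dots\}$; juxtaposition of sets of words denotes the set of concatenations. Thus e.g. $\{0,2\}^*100^*$ is the set of strings consisting of an arbitrary word in $0,2$, followed by $1$, followed by one or more $0$'s. *)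

theory Defs
  imports "HOL-Computational_Algebra.Formal_Power_Series" "HOL-Number_Theory.Cong"
begin

text \<open>The generating function F(z) = 1 + sum f_lambda z^lambda of the numbers f_lambda of
  free subgroups of index 6 lambda in PSL_2(Z): the unique formal power series with F(0) = 1
  satisfying z F^2 - (1 - 4z) F + 6 z^2 F' + 1 = 0.\<close>
definition free_gf :: "int fps" where
  "free_gf = (THE F. fps_nth F 0 = 1 \<and>
      fps_X * F ^ 2 - (1 - 4 * fps_X) * F + 6 * fps_X ^ 2 * fps_deriv F + 1 = 0)"

definition free_count :: "nat \<Rightarrow> int" where
  "free_count n = fps_nth free_gf n"

fun ternary :: "nat \<Rightarrow> nat list" where
  "ternary n = (if n = 0 then [] else ternary (n div 3) @ [n mod 3])"

end

theory Submission
  imports Defs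
begin
unbundle fps_syntax




lemma E_nth0: fixes F :: "int fps"
  shows "(fps_X * F^2 - (1 - 4*fps_X)*F + 6*fps_X^2*fps_deriv F + 1) $ 0 = 1 - F $ 0"
  by (simp add: numeral_fps_const)

lemma E_nthS: fixes F :: "int fps"
  shows "(fps_X * F^2 - (1 - 4*fps_X)*F + 6*fps_X^2*fps_deriv F + 1) $ Suc m
     = (\<Sum>i=0..m. F $ i * F $ (m-i)) - F $ (Suc m) + (6*int m + 4)*F $ m"
proof -
  have e: "fps_X * F^2 - (1 - 4*fps_X)*F + 6*fps_X^2*fps_deriv F + 1
     = fps_X*(F*F) - F + fps_const 4 * (fps_X*F) + fps_const 6 * (fps_X^2 * fps_deriv F) + 1"
    by (simp add: numeral_fps_const algebra_simps power2_eq_square)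
  have d: "(fps_X^2 * fps_deriv F) $ Suc m = of_nat m * F $ m"
    by (cases m) (auto simp: fps_X_power_mult_nth)
  have c: "(fps_X*(F*F)) $ Suc m = (\<Sum>i=0..m. F $ i * F $ (m-i))"
  proof -
    have "(fps_X*(F*F)) $ Suc m = (F*F) $ m" by (simp only: fps_X_mult_nth) simp
    also have "\<dots> = (\<Sum>i=0..m. F $ i * F $ (m-i))" by (rule fps_mult_nth)
    finally show ?thesis .
  qed
  show ?thesis unfolding e
    by (simp only: fps_add_nth fps_sub_nth fps_mult_left_const_nth c d fps_one_nth)
       (simp add: algebra_simps)
qed

fun fl :: "nat \<Rightarrow> int list" where
  "fl 0 = [1]"
| "fl (Suc n) = fl n @ [(\<Sum>i=0..n. fl n ! i * fl n ! (n-i)) + (6*int n + 4) * fl n ! n]"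

lemma fl_len: "length (fl n) = Suc n"
  by (induct n) auto

definition ff :: "nat \<Rightarrow> int" where "ff n = fl n ! n"

lemma fl_nth: "i \<le> n \<Longrightarrow> fl n ! i = ff i"
proof (induct n)
  case 0 then show ?case by (simp add: ff_def)
next
  case (Suc n)
  show ?case
  proof (cases "i \<le> n")
    case True then show ?thesis using Suc by (simp add: nth_append fl_len)
  next
    case False then have "i = Suc n" using Suc by simp
    then show ?thesis by (simp add: ff_def)
  qed
qed

lemma ff_0: "ff 0 = 1" by (simp add: ff_def)

lemma ff_Suc: "ff (Suc n) = (\<Sum>i=0..n. ff i * ff (n-i)) + (6*int n + 4) * ff n"
proof -
  have "ff (Suc n) = (\<Sum>i=0..n. fl n ! i * fl n ! (n-i)) + (6*int n + 4) * fl n ! n"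
    by (simp add: ff_def nth_append fl_len)
  also have "\<dots> = (\<Sum>i=0..n. ff i * ff (n-i)) + (6*int n + 4) * ff n"
    by (simp add: fl_nth)
  finally show ?thesis .
qed

lemma free_gf_eq: "free_gf = Abs_fps ff"
proof -
  let ?P = "\<lambda>F::int fps. fps_nth F 0 = 1 \<and>
      fps_X * F ^ 2 - (1 - 4 * fps_X) * F + 6 * fps_X ^ 2 * fps_deriv F + 1 = 0"
  have ex: "?P (Abs_fps ff)"
  proof
    show "Abs_fps ff $ 0 = 1" by (simp add: ff_0)
    show "fps_X * Abs_fps ff ^ 2 - (1 - 4 * fps_X) * Abs_fps ff + 6 * fps_X ^ 2 * fps_deriv (Abs_fps ff) + 1 = 0"
    proof (rule fps_ext)
      fix n show "(fps_X * Abs_fps ff ^ 2 - (1 - 4 * fps_X) * Abs_fps ff + 6 * fps_X ^ 2 * fps_deriv (Abs_fps ff) + 1) $ n = 0 $ n"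
        by (cases n) (simp_all only: E_nth0 E_nthS, simp_all add: ff_0 ff_Suc)
    qed
  qed
  have un: "G = Abs_fps ff" if "?P G" for G
  proof -
    have "G $ n = ff n" for n
    proof (induct n rule: less_induct)
      case (less n)
      show ?case
      proof (cases n)
        case 0 then show ?thesis using that by (simp add: ff_0)
      next
        case (Suc m)
        have "(fps_X * G ^ 2 - (1 - 4 * fps_X) * G + 6 * fps_X ^ 2 * fps_deriv G + 1) $ Suc m = 0"
          using that by simp
        then have "G $ Suc m = (\<Sum>i=0..m. G $ i * G $ (m-i)) + (6*int m + 4)*G $ m"
          by (simp only: E_nthS)
        also have "\<dots> = (\<Sum>i=0..m. ff i * ff (m-i)) + (6*int m + 4)*ff m"
          using less Suc by (intro arg_cong2[where f="(+)"] sum.cong) auto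
        finally show ?thesis by (simp add: Suc ff_Suc)
      qed
    qed
    then show ?thesis by (intro fps_ext) simp
  qed
  show ?thesis unfolding free_gf_def
    by (rule the_equality) (use ex un in blast)+
qed

lemma free_count_ff: "free_count n = ff n"
  by (simp add: free_count_def free_gf_eq)





lemma ternary_0: "ternary 0 = []" by simp

lemma ternary_step: "r < 3 \<Longrightarrow> 0 < 3*q + r \<Longrightarrow> ternary (3*q+r) = ternary q @ [r]"
  by (subst ternary.simps) simp

declare ternary.simps[simp del]

definition tb :: "nat \<Rightarrow> bool" where "tb n = (set (ternary n) \<subseteq> {0,1})"

lemma tb_step: assumes "r < 3" shows "tb (3*q+r) \<longleftrightarrow> r \<le> 1 \<and> tb q"
proof (cases "3*q+r = 0")
  case True then show ?thesis by (simp add: tb_def ternary_0)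
next
  case False then show ?thesis using assms by (auto simp: tb_def ternary_step)
qed

lemma tb_0: "tb (3*q) = tb q" using tb_step[of 0 q] by simp
lemma tb_1: "tb (Suc (3*q)) = tb q" using tb_step[of 1 q] by simp
lemma tb_2: "tb (Suc (Suc (3*q))) = False" using tb_step[of 2 q] by simp
lemma tb_1': "tb (3*q+1) = tb q" using tb_step[of 1 q] by simp
lemma tb_2': "tb (3*q+2) = False" using tb_step[of 2 q] by simp

definition acl :: "nat \<Rightarrow> int" where
  "acl m = (if tb (m div 3) then (if m mod 3 = 1 then -1 else 1) else 0)"

lemma acl_step: "r < 3 \<Longrightarrow> acl (3*q+r) = (if tb q then (if r = 1 then -1 else 1) else 0)"
  by (simp add: acl_def)

lemma dvd3_iff: "(3::int fps) dvd P \<longleftrightarrow> (\<forall>n. (3::int) dvd P $ n)"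
proof
  assume "(3::int fps) dvd P"
  then obtain R where "P = 3 * R" by blast
  then show "\<forall>n. (3::int) dvd P $ n" by (simp add: numeral_fps_const)
next
  assume h: "\<forall>n. (3::int) dvd P $ n"
  have "P = 3 * Abs_fps (\<lambda>n. P $ n div 3)"
    by (rule fps_ext) (use h in \<open>simp add: numeral_fps_const\<close>)
  then show "(3::int fps) dvd P" by (rule dvdI)
qed

lemma compose_Xpow_nth:
  fixes a :: "'a::comm_ring_1 fps"
  assumes k: "0 < k"
  shows "(a oo fps_X^k) $ n = (if k dvd n then a $ (n div k) else 0)"
proof -
  have "(a oo fps_X^k) $ n = (\<Sum>i=0..n. a $ i * ((fps_X^k)^i $ n))" by (rule fps_compose_nth)
  also have "\<dots> = (\<Sum>i=0..n. if i = n div k then (if k dvd n then a $ i else 0) else 0)"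
  proof (rule sum.cong)
    fix i assume "i \<in> {0..n}"
    have "(n = k*i) \<longleftrightarrow> (i = n div k \<and> k dvd n)" using k by auto
    then show "a $ i * ((fps_X^k)^i $ n) = (if i = n div k then (if k dvd n then a $ i else 0) else 0)"
      by (auto simp: power_mult[symmetric])
  qed simp
  also have "\<dots> = (if k dvd n then a $ (n div k) else 0)"
    using k by (auto simp: div_le_dividend)
  finally show ?thesis .
qed

lemma dvd3_compose: "(3::int fps) dvd P \<Longrightarrow> (3::int fps) dvd (P oo c)"
proof -
  assume "(3::int fps) dvd P"
  then obtain R where "P = 3 * R" by blast
  then have "P oo c = 3 * (R oo c)"
    by (simp add: numeral_fps_const fps_const_mult_apply_left)
  then show ?thesis by simp
qed

definition AA :: "int fps" where "AA = Abs_fps acl"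

lemma acl_0: "acl 0 = 1" by (simp add: acl_def tb_def ternary_0)

lemma acl_0': "acl (3*q) = (if tb q then 1 else 0)" using acl_step[of 0 q] by simp
lemma acl_1: "acl (Suc (3*q)) = (if tb q then -1 else 0)" using acl_step[of 1 q] by simp
lemma acl_2: "acl (Suc (Suc (3*q))) = (if tb q then 1 else 0)" using acl_step[of 2 q] by simp

lemma acl_rec: "(3::int) dvd ((if 3 dvd Suc m then acl (Suc m div 3) else 0) - acl (Suc m) - acl m)"
proof -
  obtain q r where m: "m = 3*q + r" and r: "r < 3" by (metis div_mult_mod_eq mod_less_divisor zero_less_numeral mult.commute)
  consider "r = 0" | "r = 1" | "r = 2" using r by linarith
  then show ?thesis
  proof cases
    case 1
    have e1: "acl (Suc m) = (if tb q then -1 else 0)"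
      using acl_step[of 1 q] m 1 by simp
    have e2: "acl m = (if tb q then 1 else 0)"
      using acl_step[of 0 q] m 1 by simp
    have "\<not> 3 dvd Suc m" using m 1 by presburger
    then show ?thesis using e1 e2 by simp
  next
    case 2
    have e1: "acl (Suc m) = (if tb q then 1 else 0)"
      using acl_step[of 2 q] m 2 by simp
    have e2: "acl m = (if tb q then -1 else 0)"
      using acl_step[of 1 q] m 2 by simp
    have "\<not> 3 dvd Suc m" using m 2 by presburger
    then show ?thesis using e1 e2 by simp
  next
    case 3
    have sm: "Suc m = 3*(q+1)+0" using m 3 by simp
    obtain s u where q: "q = 3*s + u" and u: "u < 3" by (metis div_mult_mod_eq mod_less_divisor zero_less_numeral mult.commute)
    have a1: "acl (Suc m) = (if tb (q+1) then 1 else 0)" unfolding sm by (subst acl_step) auto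
    have a2: "acl m = (if tb q then 1 else 0)" unfolding m 3 by (subst acl_step) auto
    have d: "Suc m div 3 = q + 1" "3 dvd Suc m" using m 3 by presburger+
    consider "u = 0" | "u = 1" | "u = 2" using u by linarith
    then show ?thesis
    proof cases
      case 1
      have "q+1 = 3*s+1" "q = 3*s+0" using q 1 by auto
      then show ?thesis using a1 a2 d by (simp add: tb_0 tb_1 tb_2 tb_1' tb_2' acl_0' acl_1 acl_2)
    next
      case 2
      have "q+1 = 3*s+2" "q = 3*s+1" using q 2 by auto
      then show ?thesis using a1 a2 d by (simp add: tb_0 tb_1 tb_2 tb_1' tb_2' acl_0' acl_1 acl_2)
    next
      case 3
      have h: "q+1 = 3*(s+1)" and h2: "q = 3*s+2" using q 3 by auto
      have "tb (q+1) = tb (s+1)" unfolding h by (rule tb_0)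
      moreover have "acl (q+1) = (if tb (s+1) then 1 else 0)" unfolding h by (rule acl_0')
      moreover have "tb q = False" unfolding h2 by (rule tb_2')
      ultimately show ?thesis using a1 a2 d by simp
    qed
  qed
qed

lemma AA_fun: "(3::int fps) dvd ((AA oo fps_X^3) - (1 + fps_X) * AA)"
  unfolding dvd3_iff
proof
  fix n
  show "(3::int) dvd ((AA oo fps_X^3) - (1 + fps_X) * AA) $ n"
  proof (cases n)
    case 0
    have "(AA oo fps_X^3) $ 0 = acl 0" by (simp add: AA_def)
    moreover have "((1 + fps_X) * AA) $ 0 = acl 0" by (simp add: AA_def)
    ultimately show ?thesis using 0 by (simp only: fps_sub_nth) simp
  next
    case (Suc m)
    have "((AA oo fps_X^3) - (1 + fps_X) * AA) $ n
       = (if 3 dvd Suc m then acl (Suc m div 3) else 0) - acl (Suc m) - acl m"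
      by (simp add: Suc compose_Xpow_nth AA_def distrib_right)
    then show ?thesis using acl_rec by simp
  qed
qed





definition QQ :: "int fps" where "QQ = Abs_fps (\<lambda>n. (-1)^n)"

lemma QQ_inv: "(1 + fps_X) * QQ = 1"
proof (rule fps_ext)
  fix n show "((1 + fps_X) * QQ) $ n = (1::int fps) $ n"
    by (cases n) (simp_all add: QQ_def distrib_right)
qed

definition KK :: "int fps" where "KK = AA^2 * QQ"

lemma AA_sq: "AA^2 = (1 + fps_X) * KK"
proof -
  have "(1 + fps_X) * (AA^2 * QQ) = AA^2 * ((1 + fps_X) * QQ)" by (simp only: ac_simps)
  then show ?thesis unfolding KK_def using QQ_inv by simp
qed

lemma ring_l1: fixes x k :: "'a::comm_ring_1"
  shows "(1+x)^2*((1+x)*k) - (1+x^3)*k = 3*((x+x^2)*k)"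
  by (simp add: algebra_simps power2_eq_square power3_eq_cube numeral_3_eq_3)

lemma ring_l2: fixes A3 B Q3 K D :: "'a::comm_ring_1"
  assumes "A3 = B + 3*D" "B^2 = (1+x^3)*K + 3*((x+x^2)*K)" "(1+x^3)*Q3 = 1"
  shows "A3^2*Q3 - K = 3*((2*B*D + 3*D^2 + (x+x^2)*K)*Q3)"
proof -
  have "A3^2*Q3 - K = (B^2 + 3*(2*B*D + 3*D^2))*Q3 - K" unfolding assms(1) by (simp add: algebra_simps power2_eq_square)
  also have "\<dots> = K*((1+x^3)*Q3) - K + 3*((2*B*D + 3*D^2 + (x+x^2)*K)*Q3)" unfolding assms(2) by (simp add: algebra_simps)
  finally show ?thesis using assms(3) by simp
qed

lemma KK_fun: "(3::int fps) dvd ((KK oo fps_X^3) - KK)"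
proof -
  have c0: "(fps_X^3 :: int fps) $ 0 = 0" by simp
  define Q3 where "Q3 = QQ oo fps_X^3"
  define A3 where "A3 = AA oo fps_X^3"
  define B where "B = (1 + fps_X) * AA"
  have k3: "KK oo fps_X^3 = A3^2 * Q3"
    unfolding KK_def A3_def Q3_def using c0
    by (simp add: fps_compose_mult_distrib fps_compose_power)
  have q3: "(1 + fps_X^3) * Q3 = 1"
  proof -
    have "((1 + fps_X) * QQ) oo fps_X^3 = (1 + fps_X^3) * Q3"
      unfolding Q3_def using c0
      by (simp add: fps_compose_mult_distrib fps_compose_add_distrib)
    then show ?thesis using QQ_inv by simp
  qed
  obtain D where D: "A3 - B = 3 * D"
    using AA_fun unfolding A3_def B_def by (metis dvdE)
  have a3: "A3 = B + 3 * D" using D by (simp add: algebra_simps)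
  have b2: "B^2 = (1+fps_X^3)*KK + 3*((fps_X+fps_X^2)*KK)"
  proof -
    have "B^2 = (1+fps_X)^2*((1+fps_X)*KK)" unfolding B_def AA_sq[symmetric]
      by (simp add: power_mult_distrib)
    then show ?thesis using ring_l1[of fps_X KK] by (metis diff_eq_eq add.commute)
  qed
  show ?thesis unfolding k3 using ring_l2[OF a3 b2 q3] by simp
qed

lemma KK_0: "KK $ 0 = 1"
  by (simp add: KK_def QQ_def AA_def acl_0 power2_eq_square)

lemma KK_one: "(3::int fps) dvd (KK - 1)"
  unfolding dvd3_iff
proof
  have h: "(3::int) dvd ((if 3 dvd n then KK $ (n div 3) else 0) - KK $ n)" for n
  proof -
    have "(3::int) dvd ((KK oo fps_X^3) - KK) $ n" using KK_fun dvd3_iff by blast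
    then show ?thesis by (simp add: compose_Xpow_nth)
  qed
  fix n show "(3::int) dvd (KK - 1) $ n"
  proof (induct n rule: less_induct)
    case (less n)
    show ?case
    proof (cases "n = 0")
      case True then show ?thesis by (simp add: KK_0)
    next
      case False
      have "(3::int) dvd KK $ n"
      proof (cases "3 dvd n")
        case True
        have "n div 3 < n" "n div 3 \<noteq> 0" using False True by auto
        then have a: "(3::int) dvd KK $ (n div 3)" using less by fastforce
        have b: "(3::int) dvd (KK $ (n div 3) - KK $ n)" using h[of n] True by simp
        have "KK $ n = KK $ (n div 3) - (KK $ (n div 3) - KK $ n)" by simp
        then show ?thesis using dvd_diff[OF a b] by simp
      next
        case nd: False
        then show ?thesis using h[of n] by simp
      qed
      then show ?thesis using False by simp
    qed
  qed
qed





lemma AA_sq_cong: "(3::int fps) dvd (AA^2 - (1 + fps_X))"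
proof -
  have "AA^2 - (1 + fps_X) = (1 + fps_X) * (KK - 1)" unfolding AA_sq by (simp add: algebra_simps)
  then show ?thesis using KK_one by simp
qed

definition GG :: "int fps" where "GG = AA oo fps_X^2"

lemma GG_nth: "GG $ n = (if 2 dvd n then acl (n div 2) else 0)"
  by (simp add: GG_def compose_Xpow_nth AA_def)

lemma GG_sq: "(3::int fps) dvd (GG^2 - (1 + fps_X^2))"
proof -
  have c0: "(fps_X^2 :: int fps) $ 0 = 0" by simp
  have "(AA^2 - (1 + fps_X)) oo fps_X^2 = GG^2 - (1 + fps_X^2)"
    unfolding GG_def using c0
    by (simp add: fps_compose_sub_distrib fps_compose_add_distrib fps_compose_power)
  then show ?thesis using dvd3_compose[OF AA_sq_cong, of "fps_X^2"] by simp
qed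

definition hh :: "nat \<Rightarrow> int" where "hh n = (if n = 0 then 1 else GG $ Suc n)"
definition HH :: "int fps" where "HH = Abs_fps hh"

lemma XHH: "fps_X * HH = GG - 1 + fps_X"
proof (rule fps_ext)
  fix n show "(fps_X * HH) $ n = (GG - 1 + fps_X) $ n"
  proof (cases n)
    case 0 then show ?thesis by (simp add: GG_nth acl_0)
  next
    case (Suc m) then show ?thesis
      by (cases m) (simp_all add: HH_def hh_def GG_nth)
  qed
qed

lemma ring_l3: fixes x h g :: "'a::comm_ring_1"
  assumes "x*h = g - 1 + x"
  shows "x*(x*h^2 - (1-x)*h + 1) = (g^2 - (1+x^2)) + 3*((x-1)*g + x^2 - x + 1)"
proof -
  have "x*(x*h^2 - (1-x)*h + 1) = (x*h)^2 - (1-x)*(x*h) + x" by (simp add: algebra_simps power2_eq_square)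
  also have "\<dots> = (g - 1 + x)^2 - (1-x)*(g - 1 + x) + x" unfolding assms ..
  also have "\<dots> = (g^2 - (1+x^2)) + 3*((x-1)*g + x^2 - x + 1)"
    by (simp add: algebra_simps power2_eq_square numeral_3_eq_3)
  finally show ?thesis .
qed

lemma HH_eq: "(3::int) dvd (fps_X * HH^2 - (1 - fps_X) * HH + 1) $ n"
proof -
  have "(3::int fps) dvd (fps_X * (fps_X * HH^2 - (1 - fps_X) * HH + 1))"
    unfolding ring_l3[OF XHH] by (rule dvd_add[OF GG_sq]) simp
  then have "(3::int) dvd (fps_X * (fps_X * HH^2 - (1 - fps_X) * HH + 1)) $ Suc n"
    unfolding dvd3_iff by blast
  then show ?thesis by simp
qed

lemma HH_rec: "(3::int) dvd ((\<Sum>i=0..m. hh i * hh (m-i)) - hh (Suc m) + hh m)"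
proof -
  have c: "(fps_X*(HH*HH)) $ Suc m = (\<Sum>i=0..m. hh i * hh (m-i))"
  proof -
    have "(fps_X*(HH*HH)) $ Suc m = (HH*HH) $ m" by (simp only: fps_X_mult_nth) simp
    also have "\<dots> = (\<Sum>i=0..m. HH $ i * HH $ (m-i))" by (rule fps_mult_nth)
    finally show ?thesis by (simp add: HH_def)
  qed
  have e: "fps_X * HH^2 - (1 - fps_X) * HH + 1 = fps_X*(HH*HH) - HH + fps_X * HH + 1"
    by (simp add: algebra_simps power2_eq_square)
  have "(fps_X * HH^2 - (1 - fps_X) * HH + 1) $ Suc m = (\<Sum>i=0..m. hh i * hh (m-i)) - hh (Suc m) + hh m"
    unfolding e by (simp only: fps_add_nth fps_sub_nth c fps_one_nth) (simp add: HH_def)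
  then show ?thesis using HH_eq[of "Suc m"] by simp
qed

lemma ff_hh: "[ff n = hh n] (mod 3)"
proof (induct n rule: less_induct)
  case (less n)
  show ?case
  proof (cases n)
    case 0 then show ?thesis by (simp add: ff_0 hh_def)
  next
    case (Suc m)
    have "[ff (Suc m) = (\<Sum>i=0..m. ff i * ff (m-i)) + ff m] (mod 3)"
    proof -
      have "ff (Suc m) - ((\<Sum>i=0..m. ff i * ff (m-i)) + ff m) = 3 * ((2*int m + 1) * ff m)"
        by (simp add: ff_Suc algebra_simps)
      then show ?thesis by (simp add: cong_iff_dvd_diff)
    qed
    also have "[(\<Sum>i=0..m. ff i * ff (m-i)) + ff m = (\<Sum>i=0..m. hh i * hh (m-i)) + hh m] (mod 3)"
      using less Suc by (intro cong_add cong_sum cong_mult) auto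
    also have "[(\<Sum>i=0..m. hh i * hh (m-i)) + hh m = hh (Suc m)] (mod 3)"
      using HH_rec[of m] unfolding cong_iff_dvd_diff by (simp add: algebra_simps)
    finally show ?thesis using Suc by simp
  qed
qed

lemma hh_pos: "n \<ge> 1 \<Longrightarrow> hh n = (if odd n then acl ((n+1) div 2) else 0)"
  by (simp add: hh_def GG_nth)




definition te :: "nat \<Rightarrow> bool" where "te n = (set (ternary n) \<subseteq> {0,2})"
definition Zs :: "nat \<Rightarrow> bool" where
  "Zs n = (\<exists>w k. set w \<subseteq> {0,2} \<and> ternary n = w @ [1] @ replicate k 0)"
definition Ts :: "nat \<Rightarrow> bool" where
  "Ts n = (\<exists>w k. set w \<subseteq> {0,2} \<and> ternary n = w @ [1] @ replicate k 2)"
definition Pp :: "nat \<Rightarrow> bool" where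
  "Pp n = (\<exists>w. set w \<subseteq> {0,2} \<and> ternary n = w @ [1])"
definition Zp :: "nat \<Rightarrow> bool" where
  "Zp n = (\<exists>w k. set w \<subseteq> {0,2} \<and> ternary n = w @ [1,0] @ replicate k 0)"
definition Tp :: "nat \<Rightarrow> bool" where
  "Tp n = (\<exists>w k. set w \<subseteq> {0,2} \<and> ternary n = w @ [1,2] @ replicate k 2)"

lemma list_rep: fixes xs :: "nat list"
  assumes "c \<noteq> 1"
  shows "(\<exists>w k. set w \<subseteq> S \<and> xs @ [r] = w @ [1] @ replicate k c) \<longleftrightarrow>
    (r = 1 \<and> set xs \<subseteq> S) \<or> (r = c \<and> (\<exists>w k. set w \<subseteq> S \<and> xs = w @ [1] @ replicate k c))"
proof
  assume "\<exists>w k. set w \<subseteq> S \<and> xs @ [r] = w @ [1] @ replicate k c"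
  then obtain w k where w: "set w \<subseteq> S" and e: "xs @ [r] = w @ [1] @ replicate k c" by blast
  show "(r = 1 \<and> set xs \<subseteq> S) \<or> (r = c \<and> (\<exists>w k. set w \<subseteq> S \<and> xs = w @ [1] @ replicate k c))"
  proof (cases k)
    case 0 then show ?thesis using e w by simp
  next
    case (Suc k')
    have "w @ [1] @ replicate k c = (w @ [1] @ replicate k' c) @ [c]"
      using Suc by (simp add: replicate_append_same)
    then show ?thesis using e w by auto
  qed
next
  assume "(r = 1 \<and> set xs \<subseteq> S) \<or> (r = c \<and> (\<exists>w k. set w \<subseteq> S \<and> xs = w @ [1] @ replicate k c))"
  then show "\<exists>w k. set w \<subseteq> S \<and> xs @ [r] = w @ [1] @ replicate k c"
  proof
    assume "r = 1 \<and> set xs \<subseteq> S" then show ?thesis by (intro exI[of _ xs] exI[of _ 0]) simp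
  next
    assume "r = c \<and> (\<exists>w k. set w \<subseteq> S \<and> xs = w @ [1] @ replicate k c)"
    then obtain w k where "r = c" "set w \<subseteq> S" "xs = w @ [1] @ replicate k c" by blast
    then show ?thesis by (intro exI[of _ w] exI[of _ "Suc k"]) (simp add: replicate_append_same[symmetric])
  qed
qed

lemma tern_cases:
  assumes "r < 3"
  obtains "3*q+r = 0" "q = 0" "r = 0" | "ternary (3*q+r) = ternary q @ [r]"
  using assms ternary_step by fastforce

lemma te_step: assumes "r < 3" shows "te (3*q+r) \<longleftrightarrow> r \<noteq> 1 \<and> te q"
  by (cases rule: tern_cases[OF assms, of q]) (use assms in \<open>auto simp: te_def ternary_0\<close>)

lemma Pp_step: assumes "r < 3" shows "Pp (3*q+r) \<longleftrightarrow> r = 1 \<and> te q"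
  by (cases rule: tern_cases[OF assms, of q]) (use assms in \<open>auto simp: Pp_def te_def ternary_0\<close>)

lemma Zs_step: assumes "r < 3" shows "Zs (3*q+r) \<longleftrightarrow> (r = 1 \<and> te q) \<or> (r = 0 \<and> Zs q)"
  using assms
proof (cases rule: tern_cases[of r q])
  case 1 then show ?thesis by (simp add: Zs_def ternary_0)
next
  case 2 then show ?thesis unfolding Zs_def te_def 2 using list_rep[of 0 "{0,2}" "ternary q" r] by simp
qed

lemma Ts_step: assumes "r < 3" shows "Ts (3*q+r) \<longleftrightarrow> (r = 1 \<and> te q) \<or> (r = 2 \<and> Ts q)"
  using assms
proof (cases rule: tern_cases[of r q])
  case 1 then show ?thesis by (simp add: Ts_def ternary_0)
next
  case 2 then show ?thesis unfolding Ts_def te_def 2 using list_rep[of 2 "{0,2}" "ternary q" r] by simp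
qed

lemma Zp_step: assumes "r < 3" shows "Zp (3*q+r) \<longleftrightarrow> r = 0 \<and> Zs q"
  using assms
proof (cases rule: tern_cases[of r q])
  case 1 then show ?thesis by (simp add: Zp_def Zs_def ternary_0)
next
  case 2
  have "\<And>w k. w @ [1,0] @ replicate k (0::nat) = (w @ [1] @ replicate k 0) @ [0]"
    by (simp add: replicate_append_same)
  then show ?thesis unfolding Zp_def Zs_def 2 by auto
qed

lemma Tp_step: assumes "r < 3" shows "Tp (3*q+r) \<longleftrightarrow> r = 2 \<and> Ts q"
  using assms
proof (cases rule: tern_cases[of r q])
  case 1 then show ?thesis by (simp add: Tp_def Ts_def ternary_0)
next
  case 2
  have "\<And>w k. w @ [1,2] @ replicate k (2::nat) = (w @ [1] @ replicate k 2) @ [2]"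
    by (simp add: replicate_append_same)
  then show ?thesis unfolding Tp_def Ts_def 2 by auto
qed




lemma te_eq: "n = 3*a + r \<Longrightarrow> r < 3 \<Longrightarrow> te n \<longleftrightarrow> r \<noteq> 1 \<and> te a" by (simp add: te_step)
lemma tb_eq: "n = 3*a + r \<Longrightarrow> r < 3 \<Longrightarrow> tb n \<longleftrightarrow> r \<le> 1 \<and> tb a" by (simp add: tb_step)
lemma Pp_eq: "n = 3*a + r \<Longrightarrow> r < 3 \<Longrightarrow> Pp n \<longleftrightarrow> r = 1 \<and> te a" by (simp add: Pp_step)
lemma Zs_eq: "n = 3*a + r \<Longrightarrow> r < 3 \<Longrightarrow> Zs n \<longleftrightarrow> (r = 1 \<and> te a) \<or> (r = 0 \<and> Zs a)" by (simp add: Zs_step)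
lemma Ts_eq: "n = 3*a + r \<Longrightarrow> r < 3 \<Longrightarrow> Ts n \<longleftrightarrow> (r = 1 \<and> te a) \<or> (r = 2 \<and> Ts a)" by (simp add: Ts_step)
lemma Zp_eq: "n = 3*a + r \<Longrightarrow> r < 3 \<Longrightarrow> Zp n \<longleftrightarrow> r = 0 \<and> Zs a" by (simp add: Zp_step)
lemma Tp_eq: "n = 3*a + r \<Longrightarrow> r < 3 \<Longrightarrow> Tp n \<longleftrightarrow> r = 2 \<and> Ts a" by (simp add: Tp_step)
lemma acl_eq: "n = 3*a + r \<Longrightarrow> r < 3 \<Longrightarrow> acl n = (if tb a then (if r = 1 then -1 else 1) else 0)" by (simp add: acl_step)

lemma decomp3: fixes n :: nat obtains q r where "n = 3*q + r" "r < 3" "r = 0 \<or> r = 1 \<or> r = 2"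
proof -
  have "n = 3*(n div 3) + n mod 3" "n mod 3 < 3" "n mod 3 = 0 \<or> n mod 3 = 1 \<or> n mod 3 = 2" by presburger+
  then show ?thesis by (rule that)
qed

lemma te0: "te 0" by (simp add: te_def ternary_0)
lemma tb0: "tb 0" by (simp add: tb_def ternary_0)

lemma L1: "te (2*q) \<longleftrightarrow> tb q"
proof (induct q rule: less_induct)
  case (less q)
  show ?case
  proof (cases "q = 0")
    case True then show ?thesis by (simp add: te0 tb0)
  next
    case q0: False
    obtain s t where q: "q = 3*s + t" and t: "t < 3" "t = 0 \<or> t = 1 \<or> t = 2" by (rule decomp3)
    have sq: "s < q" using q q0 by auto
    from t(2) show ?thesis
    proof (elim disjE)
      assume "t = 0"
      then have e: "2*q = 3*(2*s) + 0" using q by simp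
      then show ?thesis using te_eq[OF e] tb_eq[OF q t(1)] less[OF sq] \<open>t = 0\<close> by simp
    next
      assume "t = 1"
      then have e: "2*q = 3*(2*s) + 2" using q by simp
      then show ?thesis using te_eq[OF e] tb_eq[OF q t(1)] less[OF sq] \<open>t = 1\<close> by simp
    next
      assume "t = 2"
      then have e: "2*q = 3*(2*s+1) + 1" using q by simp
      then show ?thesis using te_eq[OF e] tb_eq[OF q t(1)] \<open>t = 2\<close> by simp
    qed
  qed
qed

lemma L2: "Zs (2*q+1) \<longleftrightarrow> tb q"
proof (induct q rule: less_induct)
  case (less q)
  obtain s t where q: "q = 3*s + t" and t: "t < 3" "t = 0 \<or> t = 1 \<or> t = 2" by (rule decomp3)
  from t(2) show ?case
  proof (elim disjE)
    assume "t = 0"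
    then have e: "2*q+1 = 3*(2*s) + 1" using q by simp
    then show ?thesis using Zs_eq[OF e] tb_eq[OF q t(1)] L1[of s] \<open>t = 0\<close> by simp
  next
    assume "t = 1"
    then have e: "2*q+1 = 3*(2*s+1) + 0" and "s < q" using q by simp_all
    then show ?thesis using Zs_eq[OF e] tb_eq[OF q t(1)] less[of s] \<open>t = 1\<close> by simp
  next
    assume "t = 2"
    then have e: "2*q+1 = 3*(2*s+1) + 2" using q by simp
    then show ?thesis using Zs_eq[OF e] tb_eq[OF q t(1)] \<open>t = 2\<close> by simp
  qed
qed

lemma L3: "q \<ge> 1 \<Longrightarrow> Ts (2*q-1) \<longleftrightarrow> tb q"
proof (induct q rule: less_induct)
  case (less q)
  obtain s t where q: "q = 3*s + t" and t: "t < 3" "t = 0 \<or> t = 1 \<or> t = 2" by (rule decomp3)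
  from t(2) show ?case
  proof (elim disjE)
    assume "t = 0"
    then have e: "2*q-1 = 3*(2*s-1) + 2" and "s < q" "s \<ge> 1" using q less(2) by simp_all
    then show ?thesis using Ts_eq[OF e] tb_eq[OF q t(1)] less(1)[of s] \<open>t = 0\<close> by simp
  next
    assume "t = 1"
    then have e: "2*q-1 = 3*(2*s) + 1" using q by simp
    then show ?thesis using Ts_eq[OF e] tb_eq[OF q t(1)] L1[of s] \<open>t = 1\<close> by simp
  next
    assume "t = 2"
    then have e: "2*q-1 = 3*(2*s+1) + 0" using q by simp
    then show ?thesis using Ts_eq[OF e] tb_eq[OF q t(1)] \<open>t = 2\<close> by simp
  qed
qed

lemma L4: "(te n \<longrightarrow> even n) \<and> (Zs n \<longrightarrow> odd n) \<and> (Ts n \<longrightarrow> odd n)"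
proof (induct n rule: less_induct)
  case (less n)
  show ?case
  proof (cases "n = 0")
    case True then show ?thesis by (simp add: Zs_def Ts_def ternary_0)
  next
    case n0: False
    obtain q r where n: "n = 3*q + r" and r: "r < 3" "r = 0 \<or> r = 1 \<or> r = 2" by (rule decomp3)
    have "q < n" using n n0 by auto
    note IH = less[OF this]
    from r(2) show ?thesis using te_eq[OF n r(1)] Zs_eq[OF n r(1)] Ts_eq[OF n r(1)] IH n
      by (elim disjE) auto
  qed
qed

lemma parity: "Pp n \<Longrightarrow> odd n" "Zp n \<Longrightarrow> odd n" "Tp n \<Longrightarrow> odd n"
proof -
  obtain q r where n: "n = 3*q + r" and r: "r < 3" "r = 0 \<or> r = 1 \<or> r = 2" by (rule decomp3)
  show "Pp n \<Longrightarrow> odd n" using Pp_eq[OF n r(1)] L4[of q] n by auto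
  show "Zp n \<Longrightarrow> odd n" using Zp_eq[OF n r(1)] L4[of q] n by auto
  show "Tp n \<Longrightarrow> odd n" using Tp_eq[OF n r(1)] L4[of q] n by auto
qed

lemma disj: "Pp n \<Longrightarrow> \<not> Zp n \<and> \<not> Tp n"
proof -
  obtain q r where n: "n = 3*q + r" and r: "r < 3" by (rule decomp3)
  show "Pp n \<Longrightarrow> \<not> Zp n \<and> \<not> Tp n" using Pp_eq[OF n r] Zp_eq[OF n r] Tp_eq[OF n r] by auto
qed

lemma hh_val: assumes "n \<ge> 1"
  shows "hh n = (if Pp n then -1 else if Zp n \<or> Tp n then 1 else 0)"
proof (cases "odd n")
  case False
  then show ?thesis using assms hh_pos parity by auto
next
  case True
  define m where "m = (n+1) div 2"
  have nm: "n = 2*m - 1" "m \<ge> 1" using True unfolding m_def by presburger+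
  have hv: "hh n = acl m" using hh_pos[OF assms] True m_def by simp
  obtain q t where m: "m = 3*q + t" and t: "t < 3" "t = 0 \<or> t = 1 \<or> t = 2" by (rule decomp3)
  from t(2) show ?thesis
  proof (elim disjE)
    assume t0: "t = 0"
    then have e: "n = 3*(2*q-1) + 2" "q \<ge> 1" using nm m by simp_all
    show ?thesis using hv acl_eq[OF m t(1)] Pp_eq[OF e(1)] Zp_eq[OF e(1)] Tp_eq[OF e(1)] L3[OF e(2)] t0
      by simp
  next
    assume t1: "t = 1"
    then have e: "n = 3*(2*q) + 1" using nm m by simp
    show ?thesis using hv acl_eq[OF m t(1)] Pp_eq[OF e(1)] Zp_eq[OF e(1)] Tp_eq[OF e(1)] L1[of q] t1
      by simp
  next
    assume t2: "t = 2"
    then have e: "n = 3*(2*q+1) + 0" using nm m by simp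
    show ?thesis using hv acl_eq[OF m t(1)] Pp_eq[OF e(1)] Zp_eq[OF e(1)] Tp_eq[OF e(1)] L2[of q] t2
      by simp
  qed
qed




theorem corollary17p5:
  fixes lam :: nat
  assumes "lam \<ge> 1"
  shows "([free_count lam = -1] (mod 3) \<longleftrightarrow>
            (\<exists>w. set w \<subseteq> {0, 2} \<and> ternary lam = w @ [1]))
       \<and> ([free_count lam = 1] (mod 3) \<longleftrightarrow>
            (\<exists>w k. set w \<subseteq> {0, 2} \<and>
               (ternary lam = w @ [1, 0] @ replicate k 0 \<or>
                ternary lam = w @ [1, 2] @ replicate k 2)))
       \<and> (\<not> (\<exists>w. set w \<subseteq> {0, 2} \<and> ternary lam = w @ [1]) \<and>
          \<not> (\<exists>w k. set w \<subseteq> {0, 2} \<and>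
               (ternary lam = w @ [1, 0] @ replicate k 0 \<or>
                ternary lam = w @ [1, 2] @ replicate k 2))
          \<longrightarrow> [free_count lam = 0] (mod 3))"
proof -
  have P: "(\<exists>w. set w \<subseteq> {0, 2} \<and> ternary lam = w @ [1]) = Pp lam" by (simp add: Pp_def)
  have ZT: "(\<exists>w k. set w \<subseteq> {0, 2} \<and>
               (ternary lam = w @ [1, 0] @ replicate k 0 \<or>
                ternary lam = w @ [1, 2] @ replicate k 2)) = (Zp lam \<or> Tp lam)"
    by (auto simp: Zp_def Tp_def)
  have c: "[free_count lam = c] (mod 3) \<longleftrightarrow> [hh lam = c] (mod 3)" for c
    using ff_hh[of lam] unfolding free_count_ff by (metis cong_sym cong_trans)
  have v: "hh lam = (if Pp lam then -1 else if Zp lam \<or> Tp lam then 1 else 0)"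
    by (rule hh_val[OF assms])
  have d: "Pp lam \<Longrightarrow> \<not> Zp lam \<and> \<not> Tp lam" by (rule disj)
  have n1: "\<not> [(-1::int) = 1] (mod 3)" "\<not> [(-1::int) = 0] (mod 3)" "\<not> [(1::int) = 0] (mod 3)"
    "\<not> [(1::int) = -1] (mod 3)" "\<not> [(0::int) = -1] (mod 3)" "\<not> [(0::int) = 1] (mod 3)"
    by (simp_all add: cong_iff_dvd_diff)
  show ?thesis unfolding P ZT c v using d n1 by auto
qed


end
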